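(* Define $\zeta:(1,\infty)\to\mathbb{R}$ by $$\zeta(d):=\int_0^1\ln(1/z^d-1)\,dz+\int_1^\infty\ln(1-1/z^d)\,dz.$$ Then $\zeta$ is strictly monotonically increasing and $$\lim_{d\to1^+}\zeta(d)=-\infty,\qquad\zeta(2)=0,\qquad\lim_{d\to\infty}\zeta(d)/d=1.$$ *)

theory Defs
  imports "HOL-Analysis.Analysis"
begin

text \<open>zeta(d) = int_0^1 ln(1/z^d - 1) dz + int_1^oo ln(1 - 1/z^d) dz, for d > 1.
  Integrals are Henstock-Kurzweil integrals over [0,1] and [1,oo); the integrands are
  absolutely integrable for d > 1, so this agrees with the Lebesgue integral.\<close>
definition zeta :: "real \<Rightarrow> real" where
  "zeta d = integral {0..1} (\<lambda>z. ln (1 / z powr d - 1))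
          + integral {1..} (\<lambda>z. ln (1 - 1 / z powr d))"

end

theory Submission imports Defs "HOL-Real_Asymp.Real_Asymp" begin

lemma Gamma_refl_real: "Gamma (x::real) * Gamma (1 - x) = pi / sin (pi * x)"
proof -
  have "complex_of_real (Gamma x * Gamma (1 - x)) = Gamma (complex_of_real x) * Gamma (1 - complex_of_real x)"
    by (simp add: Gamma_complex_of_real flip: Gamma_complex_of_real)
  also have "\<dots> = of_real pi / sin (of_real pi * of_real x)" by (rule Gamma_reflection_complex)
  also have "\<dots> = complex_of_real (pi / sin (pi * x))" by (simp flip: sin_of_real)
  finally show ?thesis by (simp only: of_real_eq_iff)
qed

lemma Digamma_refl_real:
  assumes "0 < x" "x < (1::real)"
  shows "Digamma (1 - x) - Digamma x = pi * cot (pi * x)"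
proof -
  have nx: "x \<notin> \<int>\<^sub>\<le>\<^sub>0" "1 - x \<notin> \<int>\<^sub>\<le>\<^sub>0" using assms by (auto elim!: nonpos_Ints_cases)
  have s: "sin (pi * x) > 0" using assms by (intro sin_gt_zero) auto
  have d1: "((\<lambda>x. Gamma x * Gamma (1 - x)) has_field_derivative
     (Gamma x * Digamma x * Gamma (1 - x) + Gamma x * (Gamma (1 - x) * Digamma (1 - x) * (-1)))) (at x)"
    using nx by (auto intro!: derivative_eq_intros)
  have d2: "((\<lambda>x. pi / sin (pi * x)) has_field_derivative
     (- (pi * (cos (pi * x) * pi)) / (sin (pi * x))\<^sup>2)) (at x)"
    using s by (auto intro!: derivative_eq_intros simp: power2_eq_square)
  have eqf: "(\<lambda>x. Gamma x * Gamma (1 - x)) = (\<lambda>x. pi / sin (pi * x))"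
    by (rule ext) (rule Gamma_refl_real)
  from DERIV_unique[OF d1[unfolded eqf] d2]
  have "(pi / sin (pi * x)) * (Digamma x - Digamma (1 - x)) = - (pi * (cos (pi * x) * pi)) / (sin (pi * x))\<^sup>2"
    by (simp add: Gamma_refl_real[of x, symmetric] algebra_simps)
  then have "(pi * sin (pi * x)) * (sin (pi * x) * Digamma (1 - x)) = (pi * sin (pi * x)) * (pi * cos (pi * x) + Digamma x * sin (pi * x))"
    using s by (simp add: field_simps power2_eq_square)
  then have "sin (pi * x) * Digamma (1 - x) = pi * cos (pi * x) + Digamma x * sin (pi * x)"
    using s pi_gt_zero by (subst (asm) mult_left_cancel) auto
  then show ?thesis using s
    by (simp add: cot_def field_simps)
qed

lemma series_Digamma:
  assumes "a > (-1::real)"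
  shows "(\<lambda>n. if n = 0 then 0 else 1 / real n - 1 / (real n + a)) sums (Digamma (1 + a) + euler_mascheroni)"
proof -
  have nz: "1 + a \<noteq> 0" using assms by auto
  have "(\<lambda>k. inverse (of_nat (Suc k)) - inverse ((1 + a) + of_nat k)) sums (Digamma (1 + a) + euler_mascheroni)"
    using summable_sums[OF summable_Digamma[OF nz]] by (simp add: Digamma_def)
  then have "(\<lambda>k. (\<lambda>n. if n = 0 then 0 else 1 / real n - 1 / (real n + a)) (Suc k)) sums (Digamma (1 + a) + euler_mascheroni)"
    by (simp add: field_simps add_ac)
  then show ?thesis by (subst (asm) sums_Suc_iff) simp
qed

lemma mc_ln:
  fixes w :: "'a::euclidean_space \<Rightarrow> real"
  assumes w: "\<And>z. z \<in> s \<Longrightarrow> 0 \<le> w z \<and> w z < 1"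
    and I: "\<And>n. ((\<lambda>z. w z ^ n / real n) has_integral I n) s"
    and L: "I sums L"
  shows "((\<lambda>z. - ln (1 - w z)) has_integral L) s"
proof (rule has_integral_monotone_convergence_increasing[where f = "\<lambda>N z. \<Sum>n<N. w z ^ n / real n"
      and x = "\<lambda>N. \<Sum>n<N. I n"])
  show "((\<lambda>z. \<Sum>n<N. w z ^ n / real n) has_integral (\<Sum>n<N. I n)) s" for N
    by (intro has_integral_sum I) auto
  show "(\<Sum>n<N. w z ^ n / real n) \<le> (\<Sum>n<Suc N. w z ^ n / real n)" if "z \<in> s" for N z
    using w[OF that] by simp
  show "(\<lambda>N. \<Sum>n<N. w z ^ n / real n) \<longlonglongrightarrow> - ln (1 - w z)" if "z \<in> s" for z
  proof -
    have "\<bar>- w z\<bar> < 1" using w[OF that] by auto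
    from sums_minus[OF ln_series'[OF this]]
    have "(\<lambda>n. w z ^ n / real n) sums (- ln (1 - w z))" by simp
    then show ?thesis by (simp add: sums_def)
  qed
  show "(\<lambda>N. \<Sum>n<N. I n) \<longlonglongrightarrow> L" using L by (simp add: sums_def)
qed


lemma A1: "((\<lambda>z. - ln z) has_integral 1) {0<..<(1::real)}"
proof -
  have "((\<lambda>z. - ln (1 - (1 - z))) has_integral 1) {0<..<(1::real)}"
  proof (rule mc_ln[where I = "\<lambda>n. if n = 0 then 0 else 1 / real n - 1 / (real n + 1)"])
    fix n :: nat
    have "((\<lambda>z. (1 - z) ^ n) has_integral (1 / (real n + 1))) {0..(1::real)}"
    proof -
      have der: "((\<lambda>z. - ((1 - z) ^ Suc n) / (real n + 1)) has_real_derivative (1 - x) ^ n) (at x within {0..1})" for x :: real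
      proof -
        have h: "((\<lambda>z. 1 - z) has_real_derivative (0 - 1)) (at x within {0..1})"
          by (intro derivative_intros)
        have "((\<lambda>z. (1 - z) ^ Suc n) has_real_derivative (real (Suc n) * ((0 - 1) * (1 - x) ^ n))) (at x within {0..1})"
          using DERIV_power[OF h, of "Suc n"] by simp
        from DERIV_cdivide[OF DERIV_minus[OF this], of "real n + 1"]
        show ?thesis by (rule DERIV_cong) (simp add: field_simps)
      qed
      have "((\<lambda>z. (1 - z) ^ n) has_integral ((\<lambda>z. - ((1 - z) ^ Suc n) / (real n + 1)) 1 - (\<lambda>z. - ((1 - z) ^ Suc n) / (real n + 1)) 0)) {0..(1::real)}"
      proof (rule fundamental_theorem_of_calculus)
        fix x :: real assume "x \<in> {0..1}"
        show "((\<lambda>z. - ((1 - z) ^ Suc n) / (real n + 1)) has_vector_derivative (1 - x) ^ n) (at x within {0..1})"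
          unfolding has_real_derivative_iff_has_vector_derivative[symmetric] by (rule der)
      qed simp
      then show ?thesis by simp
    qed
    from has_integral_divide[OF this, of "real n"]
    have "((\<lambda>z. (1 - z) ^ n / real n) has_integral (1 / (real n + 1)) / real n) {0<..<(1::real)}"
      by (simp add: has_integral_Icc_iff_Ioo)
    then show "((\<lambda>z. (1 - z) ^ n / real n) has_integral (if n = 0 then 0 else 1 / real n - 1 / (real n + 1))) {0<..<1}"
      by (cases "n = 0") (simp_all add: field_simps)
  next
    have "Digamma (1 + 1 :: real) + euler_mascheroni = 1"
      using Digamma_plus1[of "1::real"] by simp
    then show "(\<lambda>n. if n = 0 then 0 else 1 / real n - 1 / (real n + 1)) sums 1"
      using series_Digamma[of 1] by simp
  qed auto
  then show ?thesis by simp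
qed


lemma A2:
  assumes d: "d > (1::real)"
  shows "((\<lambda>z. - ln (1 - z powr d)) has_integral (Digamma (1 + 1/d) + euler_mascheroni)) {0<..<(1::real)}"
proof (rule mc_ln[where I = "\<lambda>n. if n = 0 then 0 else 1 / real n - 1 / (real n + 1/d)"])
  fix z :: real assume z: "z \<in> {0<..<1}"
  then show "0 \<le> z powr d \<and> z powr d < 1"
    using powr_less_mono2[of d z 1] d by auto
next
  fix n :: nat
  have "((\<lambda>z. z powr (d * real n)) has_integral (1 powr (d * real n + 1) / (d * real n + 1))) {0..1}"
    using d by (intro has_integral_powr_from_0) (auto intro: order.strict_trans2[of _ 0])
  from has_integral_divide[OF this, of "real n"]
  have "((\<lambda>z. z powr (d * real n) / real n) has_integral (1 / (d * real n + 1)) / real n) {0<..<(1::real)}"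
    by (simp add: has_integral_Icc_iff_Ioo)
  also have "?this \<longleftrightarrow> ((\<lambda>z. (z powr d) ^ n / real n) has_integral (1 / (d * real n + 1)) / real n) {0<..<(1::real)}"
    by (intro has_integral_cong) (auto simp: powr_powr powr_realpow [symmetric] mult_ac)
  moreover have "n \<noteq> 0 \<Longrightarrow> (1 / (d * real n + 1)) / real n = 1 / real n - 1 / (real n + 1/d)"
  proof -
    assume n: "n \<noteq> 0"
    have "d * real n + 1 > 0" "real n + 1/d > 0" using d n by (auto intro: add_pos_nonneg)
    then show ?thesis using d n by (simp add: field_simps)
  qed
  ultimately show "((\<lambda>z. (z powr d) ^ n / real n) has_integral (if n = 0 then 0 else 1 / real n - 1 / (real n + 1/d))) {0<..<1}"
    by (cases "n = 0") simp_all
next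
  show "(\<lambda>n. if n = 0 then 0 else 1 / real n - 1 / (real n + 1/d)) sums (Digamma (1 + 1/d) + euler_mascheroni)"
    using d by (intro series_Digamma) (auto intro: order.strict_trans2[of _ 0] simp: )
qed

lemma B:
  assumes d: "d > (1::real)"
  shows "((\<lambda>z. - ln (1 - z powr (-d))) has_integral - (Digamma (1 - 1/d) + euler_mascheroni)) {1<..}"
proof (rule mc_ln[where I = "\<lambda>n. - (if n = 0 then 0 else 1 / real n - 1 / (real n + (- 1/d)))"])
  fix z :: real assume z: "z \<in> {1<..}"
  then show "0 \<le> z powr (-d) \<and> z powr (-d) < 1"
    using d by (auto simp: powr_minus_divide)
next
  fix n :: nat
  show "((\<lambda>z. (z powr (-d)) ^ n / real n) has_integral - (if n = 0 then 0 else 1 / real n - 1 / (real n + (- 1/d)))) {1<..}"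
  proof (cases "n = 0")
    case True then show ?thesis by simp
  next
    case False
    have "((\<lambda>z. z powr (-d * real n)) has_integral (-(1 powr (-d * real n + 1)) / (-d * real n + 1))) {1..}"
    proof (intro has_integral_powr_to_inf)
      have "d * 1 \<le> d * real n" using d False by (intro mult_left_mono) auto
      then have "1 < d * real n" using d by linarith
      then show "- d * real n < -1" by simp
    qed auto
    from has_integral_divide[OF this, of "real n"]
    have h1: "((\<lambda>z. z powr (-d * real n) / real n) has_integral (-1 / (-d * real n + 1)) / real n) {1..}"
      by simp
    have "((\<lambda>z. z powr (-d * real n) / real n) has_integral (-1 / (-d * real n + 1)) / real n) {1..} \<longleftrightarrow> ((\<lambda>z. z powr (-d * real n) / real n) has_integral (-1 / (-d * real n + 1)) / real n) {1<..}"
      by (intro has_integral_spike_set_eq negligible_subset[OF negligible_sing[of 1]]) auto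
    with h1 have "((\<lambda>z. z powr (-d * real n) / real n) has_integral (-1 / (-d * real n + 1)) / real n) {1<..}" by simp
    also have "?this \<longleftrightarrow> ((\<lambda>z. (z powr (-d)) ^ n / real n) has_integral (-1 / (-d * real n + 1)) / real n) {1<..}"
      by (intro has_integral_cong) (auto simp: powr_powr powr_realpow [symmetric] mult_ac)
    also have eqv: "(-1 / (-d * real n + 1)) / real n = - (if n = 0 then 0 else 1 / real n - 1 / (real n + (- 1/d)))"
    proof -
      have "d * 1 \<le> d * real n" using d False by (intro mult_left_mono) auto
      then have "d * real n - 1 > 0" using d by linarith
      moreover have "real n - 1/d > 0"
      proof -
        have "1/d < 1" using d by simp
        moreover have "real n \<ge> 1" using False by simp
        ultimately show ?thesis by linarith
      qed
      ultimately show ?thesis using d False by (simp add: field_simps)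
    qed
    finally show ?thesis .
  qed
next
  show "(\<lambda>n. - (if n = 0 then 0 else 1 / real n - 1 / (real n + (- 1/d)))) sums (- (Digamma (1 - 1/d) + euler_mascheroni))"
    using d by (intro sums_minus) (use series_Digamma[of "-1/d"] in simp)
qed


lemma zeta_Digamma:
  assumes d: "d > (1::real)"
  shows "zeta d = Digamma (1 - 1/d) - Digamma (1/d)"
proof -
  have d0: "d > 0" using d by simp
  have I1: "((\<lambda>z. - (- ln (1 - z powr d)) + d * (- ln z)) has_integral
      (- (Digamma (1 + 1/d) + euler_mascheroni) + d * 1)) {0<..<(1::real)}"
    by (intro has_integral_add has_integral_neg has_integral_mult_right A2[OF d] A1)
  have "((\<lambda>z. ln (1 / z powr d - 1)) has_integral
      (- (Digamma (1 + 1/d) + euler_mascheroni) + d * 1)) {0<..<(1::real)}"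
  proof (subst has_integral_cong)
    fix z :: real assume z: "z \<in> {0<..<1}"
    have p: "0 < z powr d" "z powr d < 1" using z powr_less_mono2[of d z 1] d by auto
    have "1 / z powr d - 1 = (1 - z powr d) / z powr d" using p by (simp add: field_simps)
    then have "ln (1 / z powr d - 1) = ln (1 - z powr d) - ln (z powr d)"
      using p by (simp add: ln_div)
    also have "ln (z powr d) = d * ln z" using z by (simp add: ln_powr)
    finally show "ln (1 / z powr d - 1) = - (- ln (1 - z powr d)) + d * (- ln z)" by simp
  qed (rule I1)
  then have J1: "integral {0..1} (\<lambda>z. ln (1 / z powr d - 1)) = - (Digamma (1 + 1/d) + euler_mascheroni) + d"
    by (simp add: has_integral_Icc_iff_Ioo[symmetric] integral_unique)
  have "((\<lambda>z. - (- ln (1 - z powr (-d)))) has_integral - (- (Digamma (1 - 1/d) + euler_mascheroni))) {1<..}"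
    by (intro has_integral_neg B[OF d])
  then have "((\<lambda>z. ln (1 - 1 / z powr d)) has_integral (Digamma (1 - 1/d) + euler_mascheroni)) {1<..}"
    by (simp add: powr_minus_divide add.commute)
  moreover have "((\<lambda>z. ln (1 - 1 / z powr d)) has_integral (Digamma (1 - 1/d) + euler_mascheroni)) {1..} \<longleftrightarrow>
      ((\<lambda>z. ln (1 - 1 / z powr d)) has_integral (Digamma (1 - 1/d) + euler_mascheroni)) {1<..}"
    by (intro has_integral_spike_set_eq negligible_subset[OF negligible_sing[of 1]]) auto
  ultimately have J2: "integral {1..} (\<lambda>z. ln (1 - 1 / z powr d)) = Digamma (1 - 1/d) + euler_mascheroni"
    by (simp add: integral_unique)
  have "Digamma (1 + 1/d) = Digamma (1/d) + d"
    using Digamma_plus1[of "1/d"] d0 by (simp add: add.commute)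
  then show ?thesis unfolding zeta_def J1 J2 by simp
qed

lemma zeta_cot:
  assumes d: "d > (1::real)"
  shows "zeta d = pi * (cos (pi / d) / sin (pi / d))"
proof -
  have "0 < 1/d" "1/d < 1" using d by auto
  from Digamma_refl_real[OF this] show ?thesis
    using zeta_Digamma[OF d] by (simp add: cot_def)
qed

theorem lemma3:
  shows "strict_mono_on {1<..} zeta
         \<and> filterlim zeta at_bot (at_right 1)
         \<and> zeta 2 = 0
         \<and> ((\<lambda>d. zeta d / d) \<longlongrightarrow> 1) at_top"
proof (intro conjI)
  show "strict_mono_on {1<..} zeta"
  proof (rule strict_mono_onI)
    fix a b :: real assume a: "a \<in> {1<..}" and b: "b \<in> {1<..}" and ab: "a < b"
    have "0 < 1/b" "1/b < 1/a" using a b ab by (auto simp: field_simps)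
    then have 1: "Digamma (1/b) < Digamma (1/a)" by (rule Digamma_real_strict_mono)
    have "0 < 1 - 1/a" "1 - 1/a < 1 - 1/b" using a b ab by (auto simp: field_simps)
    then have 2: "Digamma (1 - 1/a) < Digamma (1 - 1/b)" by (rule Digamma_real_strict_mono)
    show "zeta a < zeta b" using 1 2 a b by (simp add: zeta_Digamma)
  qed
next
  have ev: "eventually (\<lambda>d. pi * (cos (pi / d) / sin (pi / d)) = zeta d) (at_right (1::real))"
    by (simp add: eventually_at_right_less zeta_cot eventually_at_right_field) 
       (auto intro: exI[of _ 2] simp: zeta_cot)
  have "filterlim (\<lambda>d::real. pi * (cos (pi/d) / sin (pi/d))) at_bot (at_right 1)"
    by real_asymp
  then show "filterlim zeta at_bot (at_right 1)"
    using filterlim_cong[OF refl refl ev] by simp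
next
  show "zeta 2 = 0" by (simp add: zeta_cot)
next
  have ev: "eventually (\<lambda>d. pi * (cos (pi / d) / sin (pi / d)) / d = zeta d / d) (at_top :: real filter)"
    using eventually_gt_at_top[of "1::real"] by eventually_elim (simp add: zeta_cot)
  have "((\<lambda>d::real. pi * (cos (pi/d) / sin (pi/d)) / d) \<longlongrightarrow> 1) at_top"
    by real_asymp
  then show "((\<lambda>d. zeta d / d) \<longlongrightarrow> 1) at_top"
    by (rule Lim_transform_eventually[OF _ ev])
qed

end
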